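(* Consider the local time-stepping Adams–Bashforth scheme of order $k$ described in the context, applied to $\frac{d\mathbf{y}}{dt}=\mathbf{D}(\mathbf{y})$. Let $\mathbf{c}\in\mathbb{R}^N$ satisfy $\mathbf{c}\cdot\mathbf{D}(\mathbf{y})=0$ for all $\mathbf{y}\in\mathbb{R}^N$ (a linear conserved quantity $C=\mathbf{c}\cdot\mathbf{y}$). Then $\mathbf{c}\cdot\Delta\tilde{\mathbf{y}}_n=0$ for every step index $n$. Consequently, writing $\mathbf{c}=(\mathbf{c}^1,\ldots,\mathbf{c}^S)$ according to the partition of the components, if $n_1<n_2$ are indices such that $\tilde t_{n_1}$ and $\tilde t_{n_2}$ are evaluation times of every set, i.e. $\tilde t_{n_1}=t^s_{p_s}$ and $\tilde t_{n_2}=t^s_{r_s}$ for all $s$, then $\sum_{s=1}^S \mathbf{c}^s\cdot\mathbf{y}^s_{r_s}=\sum_{s=1}^S\mathbf{c}^s\cdot\mathbf{y}^s_{p_s}$ exactly.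
   Context: We solve an autonomous system $\frac{d\mathbf{y}}{dt}=\mathbf{D}(\mathbf{y})$, $\mathbf{y}\in\mathbb{R}^N$, $\mathbf{D}:\mathbb{R}^N\to\mathbb{R}^N$. The components of $\mathbf{y}$ are partitioned into $S$ sets, $\mathbf{y}=(\mathbf{y}^1,\ldots,\mathbf{y}^S)$, and $\mathbf{D}^s$ denotes the components of $\mathbf{D}$ belonging to set $s$. Set $s$ is evaluated at strictly increasing times $t^s_0<t^s_1<\cdots$, and $\mathbf{y}^s_q$ denotes the numerical value of $\mathbf{y}^s$ at time $t^s_q$. Let $\tilde t_0<\tilde t_1<\cdots$ be the increasing enumeration of the union of all evaluation times of all sets, $\Delta\tilde t_n=\tilde t_{n+1}-\tilde t_n$. For each $s$ and $n$ let $m^s(n)$ be the index with $t^s_{m^s(n)}\le\tilde t_n<t^s_{m^s(n)+1}$, and for each $s,m$ let $n^s(m)$ be defined by $\tilde t_{n^s(m)}=t^s_m$. Lagrange polynomials: $\ell_j(t;\tau_0,\ldots,\tau_{k-1})=\prod_{i\ne j}\frac{t-\tau_i}{\tau_j-\tau_i}$. Adams–Bashforth coefficients for the merged sequence: $\tilde\alpha_{ni}=\frac{1}{\Delta\tilde t_n}\int_{\tilde t_n}^{\tilde t_{n+1}}\ell_i(t;\tilde t_n,\tilde t_{n-1},\ldots,\tilde t_{n-(k-1)})\,dt$. The scheme defines, for each $n$ (large enough that all indices below exist), $\Delta\tilde{\mathbf{y}}_n=\sum_{q^1=m^1(n)-(k-1)}^{m^1(n)}\cdots\sum_{q^S=m^S(n)-(k-1)}^{m^S(n)}\beta_{n;q^1\cdots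 q^S}\,\mathbf{D}(\mathbf{y}^1_{q^1},\ldots,\mathbf{y}^S_{q^S})$, with $\beta_{n;q^1\cdots q^S}=\Delta\tilde t_n\sum_{i=0}^{k-1}\tilde\alpha_{ni}\prod_{s=1}^S\ell_{m^s(n)-q^s}\big(\tilde t_{n-i};t^s_{m^s(n)},\ldots,t^s_{m^s(n)-(k-1)}\big)$, and the update of set $s$ from $t^s_m$ to $t^s_{m+1}$ is $\mathbf{y}^s_{m+1}=\mathbf{y}^s_m+\sum_{n=n^s(m)}^{n^s(m+1)-1}(\Delta\tilde{\mathbf{y}}_n)^s$, where $(\cdot)^s$ denotes the components belonging to set $s$. *)

theory Defs
  imports "HOL-Analysis.Analysis"
begin

definition lagr :: "nat \<Rightarrow> (nat \<Rightarrow> real) \<Rightarrow> nat \<Rightarrow> real \<Rightarrow> real" where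
  "lagr k tau j x = (\<Prod>i\<in>{..<k} - {j}. (x - tau i) / (tau j - tau i))"

definition msn :: "('s \<Rightarrow> nat \<Rightarrow> real) \<Rightarrow> (nat \<Rightarrow> real) \<Rightarrow> 's \<Rightarrow> nat \<Rightarrow> nat" where
  "msn t tt s n = (THE m. t s m \<le> tt n \<and> tt n < t s (Suc m))"

definition nsm :: "('s \<Rightarrow> nat \<Rightarrow> real) \<Rightarrow> (nat \<Rightarrow> real) \<Rightarrow> 's \<Rightarrow> nat \<Rightarrow> nat" where
  "nsm t tt s m = (THE n. tt n = t s m)"

definition ab_alpha :: "nat \<Rightarrow> (nat \<Rightarrow> real) \<Rightarrow> nat \<Rightarrow> nat \<Rightarrow> real" where
  "ab_alpha k tt n i =
     (1 / (tt (Suc n) - tt n)) * integral {tt n..tt (Suc n)} (\<lambda>x. lagr k (\<lambda>j. tt (n - j)) i x)"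

text \<open>beta_{n;q^1...q^S}; q :: 's \<Rightarrow> nat gives the index q^s for each set s.\<close>
definition lts_beta :: "nat \<Rightarrow> ('s::finite \<Rightarrow> nat \<Rightarrow> real) \<Rightarrow> (nat \<Rightarrow> real) \<Rightarrow> nat \<Rightarrow> ('s \<Rightarrow> nat) \<Rightarrow> real" where
  "lts_beta k t tt n q =
     (tt (Suc n) - tt n) *
       (\<Sum>i<k. ab_alpha k tt n i *
          (\<Prod>s\<in>UNIV. lagr k (\<lambda>j. t s (msn t tt s n - j)) (msn t tt s n - q s) (tt (n - i))))"

text \<open>Delta ytilde_n. Components are indexed by the finite type 'i, blk i is the set
  containing component i, Y s q is the numerical value y^s_q (only components i with
  blk i = s are meaningful).\<close>
definition lts_delta ::
  "nat \<Rightarrow> (('i::finite \<Rightarrow> real) \<Rightarrow> ('i \<Rightarrow> real)) \<Rightarrow> ('i \<Rightarrow> 's::finite) \<Rightarrow>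
   ('s \<Rightarrow> nat \<Rightarrow> real) \<Rightarrow> (nat \<Rightarrow> real) \<Rightarrow> ('s \<Rightarrow> nat \<Rightarrow> 'i \<Rightarrow> real) \<Rightarrow> nat \<Rightarrow> 'i \<Rightarrow> real" where
  "lts_delta k D blk t tt Y n =
     (\<lambda>j. \<Sum>q\<in>PiE UNIV (\<lambda>s. {msn t tt s n - (k - 1) .. msn t tt s n}).
        lts_beta k t tt n q * D (\<lambda>i. Y (blk i) (q (blk i)) i) j)"

end

theory Submission
  imports Defs
begin

lemma nsm_prop:
  assumes tt_mono: "strict_mono (tt::nat\<Rightarrow>real)"
    and tt_range: "range tt = (\<Union>s. range (t s))"
  shows "tt (nsm t tt s m) = t s m"
proof -
  have "t s m \<in> range tt" using tt_range by auto
  then obtain n where n: "tt n = t s m" by auto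
  have "nsm t tt s m = n"
    unfolding nsm_def
  proof (rule the_equality)
    show "tt n = t s m" by fact
    fix x assume "tt x = t s m"
    with n have "tt x = tt n" by simp
    then show "x = n" using strict_mono_eq[OF tt_mono] by metis
  qed
  then show ?thesis using n by simp
qed

theorem mainTheorem1:
  fixes k :: nat
    and D :: "('i::finite \<Rightarrow> real) \<Rightarrow> ('i \<Rightarrow> real)"
    and blk :: "'i \<Rightarrow> 's::finite"
    and t :: "'s \<Rightarrow> nat \<Rightarrow> real"
    and tt :: "nat \<Rightarrow> real"
    and Y :: "'s \<Rightarrow> nat \<Rightarrow> 'i \<Rightarrow> real"
    and c :: "'i \<Rightarrow> real"
    and n1 n2 :: nat
    and p r :: "'s \<Rightarrow> nat"
  assumes k: "k \<ge> 1"
    and t_mono: "\<And>s. strict_mono (t s)"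
    and tt_mono: "strict_mono tt"
    and tt_range: "range tt = (\<Union>s. range (t s))"
    and cons: "\<And>y. (\<Sum>i\<in>UNIV. c i * D y i) = 0"
    and update: "\<And>s m i. p s \<le> m \<Longrightarrow> m < r s \<Longrightarrow> blk i = s \<Longrightarrow>
        Y s (Suc m) i = Y s m i +
          (\<Sum>n\<in>{nsm t tt s m ..< nsm t tt s (Suc m)}. lts_delta k D blk t tt Y n i)"
    and n12: "n1 < n2"
    and p_def: "\<And>s. tt n1 = t s (p s)"
    and r_def: "\<And>s. tt n2 = t s (r s)"
  shows "(\<forall>n. (\<Sum>i\<in>UNIV. c i * lts_delta k D blk t tt Y n i) = 0) \<and>
         (\<Sum>s\<in>UNIV. \<Sum>i\<in>{i. blk i = s}. c i * Y s (r s) i) =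
         (\<Sum>s\<in>UNIV. \<Sum>i\<in>{i. blk i = s}. c i * Y s (p s) i)"
proof -
  let ?d = "lts_delta k D blk t tt Y"
  have P1: "(\<Sum>i\<in>UNIV. c i * ?d n i) = 0" for n
  proof -
    let ?Q = "PiE UNIV (\<lambda>s. {msn t tt s n - (k - 1) .. msn t tt s n})"
    have "(\<Sum>i\<in>UNIV. c i * ?d n i) =
      (\<Sum>i\<in>UNIV. \<Sum>q\<in>?Q. c i * (lts_beta k t tt n q * D (\<lambda>i. Y (blk i) (q (blk i)) i) i))"
      unfolding lts_delta_def by (simp add: sum_distrib_left)
    also have "\<dots> = (\<Sum>q\<in>?Q. lts_beta k t tt n q * (\<Sum>i\<in>UNIV. c i * D (\<lambda>i. Y (blk i) (q (blk i)) i) i))"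
      by (subst sum.swap) (simp add: sum_distrib_left algebra_simps)
    also have "\<dots> = 0" using cons by simp
    finally show ?thesis .
  qed
  have nsmP: "tt (nsm t tt s m) = t s m" for s m using nsm_prop[OF tt_mono tt_range] .
  have nsm_mono: "nsm t tt s m \<le> nsm t tt s m'" if "m \<le> m'" for s m m'
  proof -
    have "t s m \<le> t s m'" using strict_mono_less_eq[OF t_mono] that by simp
    then have "tt (nsm t tt s m) \<le> tt (nsm t tt s m')" using nsmP by simp
    then show ?thesis using strict_mono_less_eq[OF tt_mono] by simp
  qed
  have nsm_p: "nsm t tt s (p s) = n1" for s
    using nsmP[of s "p s"] p_def[of s] strict_mono_eq[OF tt_mono] by metis
  have nsm_r: "nsm t tt s (r s) = n2" for s
    using nsmP[of s "r s"] r_def[of s] strict_mono_eq[OF tt_mono] by metis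
  have pr: "p s \<le> r s" for s
  proof -
    have "tt n1 < tt n2" using n12 tt_mono by (simp add: strict_mono_less)
    then have "t s (p s) < t s (r s)" using p_def r_def by simp
    then show ?thesis using strict_mono_less[OF t_mono] by simp
  qed
  have Ym: "Y s m i = Y s (p s) i + (\<Sum>n\<in>{n1..<nsm t tt s m}. ?d n i)"
    if "blk i = s" "p s \<le> m" "m \<le> r s" for s m i
    using that(2,3)
  proof (induction m rule: dec_induct)
    case base
    then show ?case by (simp add: nsm_p)
  next
    case (step m)
    have a: "n1 \<le> nsm t tt s m" using nsm_mono[OF step.hyps(1)] nsm_p by metis
    have b: "nsm t tt s m \<le> nsm t tt s (Suc m)" using nsm_mono by simp
    have "Y s (Suc m) i = Y s m i + (\<Sum>n\<in>{nsm t tt s m ..< nsm t tt s (Suc m)}. ?d n i)"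
      using update[OF step.hyps(1) _ that(1)] step.prems by simp
    also have "\<dots> = Y s (p s) i + (\<Sum>n\<in>{n1..<nsm t tt s (Suc m)}. ?d n i)"
      using step.IH step.prems sum.atLeastLessThan_concat[OF a b, of "\<lambda>n. ?d n i"] by simp
    finally show ?case .
  qed
  have Yr: "Y s (r s) i = Y s (p s) i + (\<Sum>n\<in>{n1..<n2}. ?d n i)" if "blk i = s" for s i
    using Ym[OF that pr[of s] order.refl] by (simp add: nsm_r)
  have "(\<Sum>s\<in>UNIV. \<Sum>i\<in>{i. blk i = s}. c i * Y s (r s) i) =
        (\<Sum>s\<in>UNIV. \<Sum>i\<in>{i. blk i = s}. c i * Y s (p s) i + c i * (\<Sum>n\<in>{n1..<n2}. ?d n i))"
    by (intro sum.cong refl) (simp add: Yr distrib_left)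
  also have "\<dots> = (\<Sum>s\<in>UNIV. \<Sum>i\<in>{i. blk i = s}. c i * Y s (p s) i) +
       (\<Sum>s\<in>UNIV. \<Sum>i\<in>{i. blk i = s}. c i * (\<Sum>n\<in>{n1..<n2}. ?d n i))"
    by (simp add: sum.distrib)
  also have "(\<Sum>s\<in>UNIV. \<Sum>i\<in>{i. blk i = s}. c i * (\<Sum>n\<in>{n1..<n2}. ?d n i))
      = (\<Sum>i\<in>UNIV. c i * (\<Sum>n\<in>{n1..<n2}. ?d n i))"
    using sum.group[of UNIV UNIV blk "\<lambda>i. c i * (\<Sum>n\<in>{n1..<n2}. ?d n i)"] by simp
  also have "\<dots> = (\<Sum>n\<in>{n1..<n2}. \<Sum>i\<in>UNIV. c i * ?d n i)"
    by (simp add: sum_distrib_left sum.swap[of _ UNIV])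
  also have "\<dots> = 0" using P1 by simp
  finally show ?thesis using P1 by simp
qed

end
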